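(* Let $\mathbf{CTC}$ be the Core Tuplix Calculus over a nonempty attribute set $A$ and a non-trivial cancellation meadow $\mathcal{D}$ (defined in the context). Every $\mathbf{CTC}$ tuplix term $t$ is derivably equal in $\mathbf{CTC}$ to a canonical term, i.e. to a term of the form \[ \gamma(p_0)\oplus a_1(p_1)\oplus\cdots\oplus a_k(p_k)\oplus x_1\oplus\cdots\oplus x_l \] for some $k,l\ge 0$, data terms $p_0,\dots,p_k$, pairwise distinct attributes $a_1,\dots,a_k\in A$, and tuplix variables $x_1,\dots,x_l$.
   Context: Data: a meadow is a commutative ring with unit with a total unary operation $(\cdot)^{-1}$ satisfying $(u^{-1})^{-1}=u$ and $u\cdot(u\cdot u^{-1})=u$; a non-trivial cancellation meadow additionally satisfies $0\neq 1$ and the cancellation law ($u\neq 0$ and $uv=uw$ imply $v=w$). Fix such a structure $\mathcal{D}$. Data terms are built from data variables ($u,v,w,\dots$), constants $0,1$, binary $+,\cdot$ and unary $-$, $(\cdot)^{-1}$; write $p/q$ for $p\cdot q^{-1}$ and $p-q$ for $p+(-q)$. Fix a nonempty set $A$ of attributes. Tuplix terms are built from tuplix variables $x,y,z,\dots$, constants $\epsilon$ (empty tuplix) and $\delta$ (null tuplix), entries $a(p)$ ($a\in A$, $p$ a data term), zero tests $\gamma(p)$ ($p$ a data term), and the binary operator $\oplus$ (conjunctive composition). $\mathbf{CTC}$ is the two-sorted equational proof system with axioms (T1) $x\oplus y=y\oplus x$; (T2) $(x\oplus y)\oplus z=x\oplus(y\oplus z)$; (T3) $x\oplus\epsilon=x$;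 (T4) $x\oplus\delta=\delta$; (T5) $a(u)\oplus a(v)=a(u+v)$; (T6) $\gamma(u)=\gamma(u/u)$; (T7) $\gamma(0)=\epsilon$; (T8) $\gamma(1)=\delta$; (T9) $\gamma(u)\oplus\gamma(v)=\gamma(u/u+v/v)$; (T10) $\gamma(u-v)\oplus a(u)=\gamma(u-v)\oplus a(v)$ (for all $a\in A$), together with the rule (DE): for all data terms $p,q$, if $\mathcal{D}\models p=q$ then $\gamma(p)=\gamma(q)$ is derivable. *)

theory Defs
  imports Main
begin

record 'd dstruct =
  d_zero :: 'd
  d_one  :: 'd
  d_add  :: "'d \<Rightarrow> 'd \<Rightarrow> 'd"
  d_mul  :: "'d \<Rightarrow> 'd \<Rightarrow> 'd"
  d_neg  :: "'d \<Rightarrow> 'd"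
  d_inv  :: "'d \<Rightarrow> 'd"

definition meadow :: "'d dstruct \<Rightarrow> bool" where
  "meadow D \<longleftrightarrow>
     (\<forall>u v w. d_add D (d_add D u v) w = d_add D u (d_add D v w)) \<and>
     (\<forall>u v. d_add D u v = d_add D v u) \<and>
     (\<forall>u. d_add D u (d_zero D) = u) \<and>
     (\<forall>u. d_add D u (d_neg D u) = d_zero D) \<and>
     (\<forall>u v w. d_mul D (d_mul D u v) w = d_mul D u (d_mul D v w)) \<and>
     (\<forall>u v. d_mul D u v = d_mul D v u) \<and>
     (\<forall>u. d_mul D u (d_one D) = u) \<and>
     (\<forall>u v w. d_mul D u (d_add D v w) = d_add D (d_mul D u v) (d_mul D u w)) \<and>
     (\<forall>u. d_inv D (d_inv D u) = u) \<and>
     (\<forall>u. d_mul D u (d_mul D u (d_inv D u)) = u)"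

definition nontrivial_cancellation_meadow :: "'d dstruct \<Rightarrow> bool" where
  "nontrivial_cancellation_meadow D \<longleftrightarrow>
     meadow D \<and> d_zero D \<noteq> d_one D \<and>
     (\<forall>u v w. u \<noteq> d_zero D \<longrightarrow> d_mul D u v = d_mul D u w \<longrightarrow> v = w)"

datatype 'v dterm =
    DVar 'v
  | DZero
  | DOne
  | DPlus "'v dterm" "'v dterm"
  | DTimes "'v dterm" "'v dterm"
  | DNeg "'v dterm"
  | DInv "'v dterm"

fun deval :: "'d dstruct \<Rightarrow> ('v \<Rightarrow> 'd) \<Rightarrow> 'v dterm \<Rightarrow> 'd" where
  "deval D \<sigma> (DVar u) = \<sigma> u"
| "deval D \<sigma> DZero = d_zero D"
| "deval D \<sigma> DOne = d_one D"
| "deval D \<sigma> (DPlus p q) = d_add D (deval D \<sigma> p) (deval D \<sigma> q)"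
| "deval D \<sigma> (DTimes p q) = d_mul D (deval D \<sigma> p) (deval D \<sigma> q)"
| "deval D \<sigma> (DNeg p) = d_neg D (deval D \<sigma> p)"
| "deval D \<sigma> (DInv p) = d_inv D (deval D \<sigma> p)"

definition dvalid :: "'d dstruct \<Rightarrow> 'v dterm \<Rightarrow> 'v dterm \<Rightarrow> bool" where
  "dvalid D p q \<longleftrightarrow> (\<forall>\<sigma>. deval D \<sigma> p = deval D \<sigma> q)"

definition DDiv :: "'v dterm \<Rightarrow> 'v dterm \<Rightarrow> 'v dterm" where
  "DDiv p q = DTimes p (DInv q)"

definition DMinus :: "'v dterm \<Rightarrow> 'v dterm \<Rightarrow> 'v dterm" where
  "DMinus p q = DPlus p (DNeg q)"

datatype ('a, 'v, 'x) tterm =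
    TVar 'x
  | Eps
  | Delta
  | Entry 'a "'v dterm"
  | Gamma "'v dterm"
  | Oplus "('a, 'v, 'x) tterm" "('a, 'v, 'x) tterm"

inductive ctc_eq :: "'d dstruct \<Rightarrow> ('a, 'v, 'x) tterm \<Rightarrow> ('a, 'v, 'x) tterm \<Rightarrow> bool"
  for D :: "'d dstruct" where
  refl:  "ctc_eq D t t"
| sym:   "ctc_eq D s t \<Longrightarrow> ctc_eq D t s"
| trans: "ctc_eq D s t \<Longrightarrow> ctc_eq D t r \<Longrightarrow> ctc_eq D s r"
| cong_oplus: "ctc_eq D s s' \<Longrightarrow> ctc_eq D t t' \<Longrightarrow> ctc_eq D (Oplus s t) (Oplus s' t')"
| T1:  "ctc_eq D (Oplus x y) (Oplus y x)"
| T2:  "ctc_eq D (Oplus (Oplus x y) z) (Oplus x (Oplus y z))"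
| T3:  "ctc_eq D (Oplus x Eps) x"
| T4:  "ctc_eq D (Oplus x Delta) Delta"
| T5:  "ctc_eq D (Oplus (Entry a p) (Entry a q)) (Entry a (DPlus p q))"
| T6:  "ctc_eq D (Gamma p) (Gamma (DDiv p p))"
| T7:  "ctc_eq D (Gamma DZero) Eps"
| T8:  "ctc_eq D (Gamma DOne) Delta"
| T9:  "ctc_eq D (Oplus (Gamma p) (Gamma q)) (Gamma (DPlus (DDiv p p) (DDiv q q)))"
| T10: "ctc_eq D (Oplus (Gamma (DMinus p q)) (Entry a p)) (Oplus (Gamma (DMinus p q)) (Entry a q))"
| DE:  "dvalid D p q \<Longrightarrow> ctc_eq D (Gamma p) (Gamma q)"

definition canon :: "'v dterm \<Rightarrow> ('a \<times> 'v dterm) list \<Rightarrow> 'x list \<Rightarrow> ('a, 'v, 'x) tterm" where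
  "canon p0 es xs =
     foldl Oplus (Gamma p0) (map (\<lambda>(a, p). Entry a p) es @ map TVar xs)"

end

theory Submission
  imports Defs "HOL-Library.Multiset"
begin

lemmas ctc_trans[trans] = ctc_eq.trans

abbreviation F :: "('a,'v,'x) tterm \<Rightarrow> ('a,'v,'x) tterm list \<Rightarrow> ('a,'v,'x) tterm" where
  "F g L \<equiv> foldl Oplus g L"

lemma F_cong: "ctc_eq D g g' \<Longrightarrow> ctc_eq D (F g L) (F g' L)"
  by (induction L arbitrary: g g') (auto intro: ctc_eq.cong_oplus ctc_eq.refl)

lemma F_pull: "ctc_eq D (F (Oplus g x) L) (Oplus (F g L) x)"
proof (induction L rule: rev_induct)
  case Nil show ?case by (simp add: ctc_eq.refl)
next
  case (snoc y L)
  have "ctc_eq D (F (Oplus g x) (L@[y])) (Oplus (Oplus (F g L) x) y)"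
    using snoc by (simp add: ctc_eq.cong_oplus ctc_eq.refl)
  also have "ctc_eq D \<dots> (Oplus (F g L) (Oplus x y))" by (rule ctc_eq.T2)
  also have "ctc_eq D \<dots> (Oplus (F g L) (Oplus y x))" by (intro ctc_eq.cong_oplus ctc_eq.refl ctc_eq.T1)
  also have "ctc_eq D \<dots> (Oplus (Oplus (F g L) y) x)" by (rule ctc_eq.sym, rule ctc_eq.T2)
  finally show ?case by simp
qed

lemma F_rot: "ctc_eq D (F g (A@[x])) (F g (x#A))"
  using F_pull[of D g x A] by (simp add: ctc_eq.sym)

lemma F_perm: "mset L = mset L' \<Longrightarrow> ctc_eq D (F g L) (F g L')"
proof (induction L arbitrary: g L')
  case Nil then show ?case by (simp add: ctc_eq.refl)
next
  case (Cons x L)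
  have "x \<in> set L'" using Cons.prems by (metis list.set_intros(1) set_mset_mset)
  then obtain A B where L': "L' = A @ x # B" by (metis split_list)
  have m: "mset L = mset (A@B)" using Cons.prems L' by simp
  have "ctc_eq D (F g (x#L)) (F (Oplus g x) (A@B))" using Cons.IH[OF m] by simp
  also have "F (Oplus g x) (A@B) = F (F g (x#A)) B" by simp
  also have "ctc_eq D (F (F g (x#A)) B) (F (F g (A@[x])) B)"
    by (rule F_cong, rule ctc_eq.sym, rule F_rot)
  also have "F (F g (A@[x])) B = F g L'" using L' by simp
  finally show ?case .
qed

definition ent :: "('a \<times> 'v dterm) list \<Rightarrow> ('a,'v,'x) tterm list" where
  "ent es = map (\<lambda>(a, p). Entry a p) es"

lemma canon_F: "canon p0 es xs = F (Gamma p0) (ent es @ map TVar xs)"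
  by (simp add: canon_def ent_def)

fun ins :: "'a \<Rightarrow> 'v dterm \<Rightarrow> ('a \<times> 'v dterm) list \<Rightarrow> ('a \<times> 'v dterm) list" where
  "ins a q [] = [(a,q)]"
| "ins a q ((b,p)#es) = (if a = b then (a, DPlus p q)#es else (b,p) # ins a q es)"

lemma ins_notin: "a \<notin> fst ` set es \<Longrightarrow> ins a q es = es @ [(a,q)]"
  by (induction es) auto

lemma ins_in: "a \<in> fst ` set es \<Longrightarrow> \<exists>A p B. es = A@(a,p)#B \<and> ins a q es = A@(a,DPlus p q)#B"
proof (induction es)
  case Nil then show ?case by simp
next
  case (Cons e es)
  obtain b p where e: "e = (b,p)" by fastforce
  show ?case
  proof (cases "a = b")
    case True then show ?thesis using e by (intro exI[of _ "[]"]) auto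
  next
    case False
    then have "a \<in> fst ` set es" using Cons.prems e by auto
    then obtain A p' B where "es = A@(a,p')#B \<and> ins a q es = A@(a,DPlus p' q)#B"
      using Cons.IH by blast
    then show ?thesis using e False by (intro exI[of _ "(b,p)#A"]) auto
  qed
qed

lemma set_ins: "fst ` set (ins a q es) = insert a (fst ` set es)"
proof (induction es)
  case (Cons e es) then show ?case by (cases e) auto
qed simp

lemma distinct_ins: "distinct (map fst es) \<Longrightarrow> distinct (map fst (ins a q es))"
proof (induction es)
  case Nil then show ?case by simp
next
  case (Cons e es)
  obtain b p where e: "e = (b,p)" by fastforce
  show ?case
  proof (cases "a = b")
    case True then show ?thesis using Cons.prems e by simp
  next
    case False
    have "b \<notin> fst ` set (ins a q es)" using Cons.prems e False unfolding set_ins by auto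
    moreover have "distinct (map fst (ins a q es))" using Cons by simp
    ultimately show ?thesis using e False by (simp add: image_iff)
  qed
qed

lemma m1: "mset (ent A @ Entry a p # ent B @ R @ [Entry a q]) = mset ((ent A @ ent B @ R) @ [Entry a p, Entry a q])"
  by simp
lemma m2: "mset ((ent A @ ent B @ R) @ [Entry a (DPlus p q)]) = mset (ent A @ Entry a (DPlus p q) # ent B @ R)"
  by simp
lemma m3: "mset (ent es @ R @ [Entry a q]) = mset (ent (es @ [(a, q)]) @ R)"
  by (simp add: ent_def)

lemma ins_ok:
  fixes es :: "('a \<times> 'v dterm) list" and xs :: "'x list"
  shows "ctc_eq D (Oplus (canon p0 es xs) (Entry a q)) (canon p0 (ins a q es) xs)"
proof (cases "a \<in> fst ` set es")
  case False
  have e1: "Oplus (canon p0 es xs) (Entry a q) = F (Gamma p0) (ent es @ map TVar xs @ [Entry a q])"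
    unfolding canon_F by simp
  have e2: "canon p0 (ins a q es) xs = F (Gamma p0) ((ent (es @ [(a, q)]) :: ('a,'v,'x) tterm list) @ map TVar xs)"
    using ins_notin[OF False] by (simp add: canon_def ent_def)
  show ?thesis unfolding e1 e2 by (rule F_perm[OF m3])
next
  case True
  obtain A p B where es: "es = A@(a,p)#B" and i: "ins a q es = A@(a,DPlus p q)#B"
    using ins_in[OF True, of q] by (elim exE conjE)
  define g :: "('a,'v,'x) tterm" where "g = Gamma p0"
  define R :: "('a,'v,'x) tterm list" where "R = map TVar xs"
  define M where "M = ent A @ ent B @ R"
  have e1: "Oplus (canon p0 es xs) (Entry a q) = F g (ent A @ Entry a p # ent B @ R @ [Entry a q])"
    unfolding canon_F es g_def R_def by (simp add: ent_def)
  have e2: "canon p0 (ins a q es) xs = F g (ent A @ Entry a (DPlus p q) # ent B @ R)"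
    unfolding canon_F i g_def R_def by (simp add: ent_def)
  have s1: "ctc_eq D (F g (ent A @ Entry a p # ent B @ R @ [Entry a q])) (F g (M @ [Entry a p, Entry a q]))"
    unfolding M_def by (rule F_perm[OF m1])
  have s2: "F g (M @ [Entry a p, Entry a q]) = Oplus (Oplus (F g M) (Entry a p)) (Entry a q)" by simp
  have s3: "ctc_eq D (Oplus (Oplus (F g M) (Entry a p)) (Entry a q)) (Oplus (F g M) (Entry a (DPlus p q)))"
    by (rule ctc_eq.trans[OF ctc_eq.T2], intro ctc_eq.cong_oplus ctc_eq.refl ctc_eq.T5)
  have s4: "Oplus (F g M) (Entry a (DPlus p q)) = F g (M @ [Entry a (DPlus p q)])" by simp
  have s5: "ctc_eq D (F g (M @ [Entry a (DPlus p q)])) (F g (ent A @ Entry a (DPlus p q) # ent B @ R))"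
    unfolding M_def by (rule F_perm[OF m2])
  show ?thesis unfolding e1 e2
    by (rule ctc_eq.trans[OF s1], unfold s2, rule ctc_eq.trans[OF s3], unfold s4, rule s5)
qed

lemma var_ok: "ctc_eq D (Oplus (canon p0 es xs) (TVar x)) (canon p0 es (xs@[x]))"
  by (simp add: canon_F ctc_eq.refl)

lemma gamma_ok: "ctc_eq D (Oplus (canon p0 es xs) (Gamma q))
   (canon (DPlus (DDiv p0 p0) (DDiv q q)) es xs)"
proof -
  have "ctc_eq D (Oplus (canon p0 es xs) (Gamma q)) (F (Oplus (Gamma p0) (Gamma q)) (ent es @ map TVar xs))"
    unfolding canon_F by (rule ctc_eq.sym, rule F_pull)
  also have "ctc_eq D \<dots> (canon (DPlus (DDiv p0 p0) (DDiv q q)) es xs)"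
    unfolding canon_F by (rule F_cong, rule ctc_eq.T9)
  finally show ?thesis .
qed

fun run :: "'v dterm \<times> ('a \<times> 'v dterm) list \<times> 'x list \<Rightarrow> ('a,'v,'x) tterm
   \<Rightarrow> 'v dterm \<times> ('a \<times> 'v dterm) list \<times> 'x list" where
  "run S (Oplus s u) = run (run S s) u"
| "run (p0, es, xs) (TVar x) = (p0, es, xs@[x])"
| "run (p0, es, xs) Eps = (p0, es, xs)"
| "run (p0, es, xs) Delta = (DOne, [], [])"
| "run (p0, es, xs) (Entry a q) = (p0, ins a q es, xs)"
| "run (p0, es, xs) (Gamma q) = (DPlus (DDiv p0 p0) (DDiv q q), es, xs)"

lemma run_distinct: "distinct (map fst (fst (snd S))) \<Longrightarrow> distinct (map fst (fst (snd (run S t))))"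
  by (induction S t rule: run.induct) (auto simp: distinct_ins)

lemma run_ok: "ctc_eq D (Oplus (case S of (p0,es,xs) \<Rightarrow> canon p0 es xs) t)
   (case run S t of (p0,es,xs) \<Rightarrow> canon p0 es xs)"
proof (induction S t rule: run.induct)
  case (1 S s u)
  obtain p0 es xs where S: "S = (p0,es,xs)" by (cases S) auto
  let ?c = "\<lambda>S. case S of (p0,es,xs) \<Rightarrow> canon p0 es xs"
  have "ctc_eq D (Oplus (?c S) (Oplus s u)) (Oplus (Oplus (?c S) s) u)"
    by (rule ctc_eq.sym, rule ctc_eq.T2)
  also have "ctc_eq D \<dots> (Oplus (?c (run S s)) u)"
    using 1 by (intro ctc_eq.cong_oplus ctc_eq.refl)
  also have "ctc_eq D \<dots> (?c (run (run S s) u))" using 1 by simp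
  finally show ?case by simp
next
  case (2 p0 es xs x) then show ?case by (simp add: var_ok)
next
  case (3 p0 es xs) then show ?case by (simp add: ctc_eq.T3)
next
  case (4 p0 es xs)
  have "ctc_eq D (Oplus (canon p0 es xs) Delta) Delta" by (rule ctc_eq.T4)
  also have "ctc_eq D Delta (Gamma DOne)" by (rule ctc_eq.sym, rule ctc_eq.T8)
  finally show ?case by (simp add: canon_def)
next
  case (5 p0 es xs a q) then show ?case by (simp add: ins_ok)
next
  case (6 p0 es xs q) then show ?case by (simp add: gamma_ok)
qed

theorem lemma1:
  fixes D :: "'d dstruct" and t :: "('a, 'v, 'x) tterm"
  assumes "nontrivial_cancellation_meadow D"
  shows "\<exists>p0 es xs. distinct (map fst es) \<and> ctc_eq D t (canon p0 es xs)"
proof -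
  obtain p0 es xs where R: "run (DZero, [], []) t = (p0, es, xs)" by (cases "run (DZero, [], []) t") auto
  have d: "distinct (map fst es)" using run_distinct[of "(DZero, [], [])" t] R by simp
  have "ctc_eq D t (Oplus t Eps)" by (rule ctc_eq.sym, rule ctc_eq.T3)
  also have "ctc_eq D \<dots> (Oplus Eps t)" by (rule ctc_eq.T1)
  also have "ctc_eq D \<dots> (Oplus (Gamma DZero) t)"
    by (intro ctc_eq.cong_oplus ctc_eq.refl ctc_eq.sym[OF ctc_eq.T7])
  also have "ctc_eq D \<dots> (canon p0 es xs)"
    using run_ok[of D "(DZero, [], [])" t] R by (simp add: canon_def)
  finally show ?thesis using d by blast
qed

end
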